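(* Let $R$ be an associative ring with identity and involution $*$, and let $a\in R^{\#}\cap R^{\dagger}$. Then $a\in R^{SEP}$ if and only if $a(a^{\#})^*a^{\dagger}$ and $a^{\dagger}a^2$ are left $a^{\dagger}aa^{\#}$-equivalent, i.e. $a^{\dagger}aa^{\#}\,a(a^{\#})^*a^{\dagger}=a^{\dagger}aa^{\#}\,a^{\dagger}a^2$.
   Context: An involution on $R$ is a map $x\mapsto x^*$ with $(x^* )^*=x$, $(x+y)^*=x^*+y^*$, $(xy)^*=y^*x^*$. An element $a$ is Moore–Penrose invertible if there is $b$ with $aba=a$, $bab=b$, $(ab)^*=ab$, $(ba)^*=ba$; such $b$ is unique, denoted $a^{\dagger}$, and $R^{\dagger}$ is the set of such $a$. An element $a$ is group invertible if there is $b$ with $aba=a$, $bab=b$, $ab=ba$; such $b$ is unique, denoted $a^{\#}$, and $R^{\#}$ is the set of such $a$. For $a\in R^{\#}\cap R^{\dagger}$, $a$ is SEP if $a^*=a^{\dagger}=a^{\#}$; $R^{SEP}$ denotes the set of SEP elements. For $x,b,c\in R$, $b$ and $c$ are left $x$-equivalent if $xb=xc$. *)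

theory Defs
  imports Main
begin

definition involution :: "('a::ring_1 \<Rightarrow> 'a) \<Rightarrow> bool" where
  "involution s \<longleftrightarrow> (\<forall>x. s (s x) = x) \<and> (\<forall>x y. s (x + y) = s x + s y)
     \<and> (\<forall>x y. s (x * y) = s y * s x)"

definition is_mp_inverse :: "('a::ring_1 \<Rightarrow> 'a) \<Rightarrow> 'a \<Rightarrow> 'a \<Rightarrow> bool" where
  "is_mp_inverse s a b \<longleftrightarrow> a * b * a = a \<and> b * a * b = b \<and> s (a * b) = a * b \<and> s (b * a) = b * a"

definition mp_invertible :: "('a::ring_1 \<Rightarrow> 'a) \<Rightarrow> 'a \<Rightarrow> bool" where
  "mp_invertible s a \<longleftrightarrow> (\<exists>b. is_mp_inverse s a b)"

definition mp_inv :: "('a::ring_1 \<Rightarrow> 'a) \<Rightarrow> 'a \<Rightarrow> 'a" where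
  "mp_inv s a = (THE b. is_mp_inverse s a b)"

definition is_group_inverse :: "'a::ring_1 \<Rightarrow> 'a \<Rightarrow> bool" where
  "is_group_inverse a b \<longleftrightarrow> a * b * a = a \<and> b * a * b = b \<and> a * b = b * a"

definition group_invertible :: "'a::ring_1 \<Rightarrow> bool" where
  "group_invertible a \<longleftrightarrow> (\<exists>b. is_group_inverse a b)"

definition group_inv :: "'a::ring_1 \<Rightarrow> 'a" where
  "group_inv a = (THE b. is_group_inverse a b)"

definition SEP :: "('a::ring_1 \<Rightarrow> 'a) \<Rightarrow> 'a \<Rightarrow> bool" where
  "SEP s a \<longleftrightarrow> group_invertible a \<and> mp_invertible s a
     \<and> s a = mp_inv s a \<and> mp_inv s a = group_inv a"

definition left_equiv :: "'a::ring_1 \<Rightarrow> 'a \<Rightarrow> 'a \<Rightarrow> bool" where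
  "left_equiv x b c \<longleftrightarrow> x * b = x * c"

end

theory Submission
  imports Defs
begin

lemma mp_unique:
  fixes s :: "'a::ring_1 \<Rightarrow> 'a"
  assumes inv: "involution s" and x: "is_mp_inverse s a x" and y: "is_mp_inverse s a y"
  shows "x = y"
proof -
  have ss: "\<And>u. s (s u) = u" and sm: "\<And>u v. s (u * v) = s v * s u"
    using inv unfolding involution_def by auto
  have x1: "a*x*a = a" "x*a*x = x" "s (a*x) = a*x" "s (x*a) = x*a"
    and y1: "a*y*a = a" "y*a*y = y" "s (a*y) = a*y" "s (y*a) = y*a"
    using x y unfolding is_mp_inverse_def by auto
  have "a*x = (a*y*a)*x" by (simp only: y1(1))
  also have "\<dots> = (a*y)*(a*x)" by (simp add: mult.assoc)
  also have "\<dots> = s (a*y) * s (a*x)" using x1 y1 by simp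
  also have "\<dots> = s (a*x*(a*y))" using sm by simp
  also have "a*x*(a*y) = a*y" using x1 by (simp add: mult.assoc[symmetric])
  finally have ax: "a*x = a*y" using y1 by simp
  have "x*a = x*(a*y*a)" by (simp only: y1(1))
  also have "\<dots> = (x*a)*(y*a)" by (simp add: mult.assoc)
  also have "\<dots> = s (x*a) * s (y*a)" using x1 y1 by simp
  also have "\<dots> = s (y*a*(x*a))" using sm by simp
  also have "y*a*(x*a) = y*(a*x*a)" by (simp add: mult.assoc)
  also have "\<dots> = y*a" by (simp only: x1(1))
  finally have xa: "x*a = y*a" using y1 by simp
  have "x = x*a*x" using x1 by simp
  also have "\<dots> = y*(a*x)" using xa by (simp add: mult.assoc)
  also have "\<dots> = y*a*y" using ax by (simp add: mult.assoc)
  finally show ?thesis using y1 by simp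
qed

lemma g_unique:
  fixes a :: "'a::ring_1"
  assumes x: "is_group_inverse a x" and y: "is_group_inverse a y"
  shows "x = y"
proof -
  have x1: "a*x*a = a" "x*a*x = x" "a*x = x*a"
    and y1: "a*y*a = a" "y*a*y = y" "a*y = y*a"
    using x y unfolding is_group_inverse_def by auto
  have "a*x = (a*y*a)*x" by (simp only: y1(1))
  also have "\<dots> = (a*y)*(a*x)" by (simp add: mult.assoc)
  also have "\<dots> = (y*a)*(a*x)" by (simp only: y1(3))
  also have "\<dots> = (y*a)*(x*a)" by (simp only: x1(3))
  also have "\<dots> = y*(a*x*a)" by (simp add: mult.assoc)
  also have "\<dots> = y*a" by (simp only: x1(1))
  finally have e: "a*x = a*y" by (simp only: y1(3))
  have "x = x*a*x" by (simp only: x1(2))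
  also have "\<dots> = x*(a*y)" by (simp only: mult.assoc e)
  also have "\<dots> = (x*a)*y" by (simp add: mult.assoc)
  also have "\<dots> = (a*x)*y" by (simp only: x1(3))
  also have "\<dots> = y*a*y" by (simp only: e y1(3))
  finally show ?thesis using y1 by simp
qed


theorem theorem5p4:
  fixes s :: "'a::ring_1 \<Rightarrow> 'a" and a :: 'a
  assumes "involution s"
    and "group_invertible a" and "mp_invertible s a"
  shows "SEP s a \<longleftrightarrow>
    left_equiv (mp_inv s a * a * group_inv a)
      (a * s (group_inv a) * mp_inv s a) (mp_inv s a * a ^ 2)"
proof -
  have ss: "\<And>u. s (s u) = u" and sm: "\<And>u v. s (u * v) = s v * s u"
    using assms(1) unfolding involution_def by auto
  obtain b where bm: "is_mp_inverse s a b" using assms(3) mp_invertible_def by blast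
  obtain g where gm: "is_group_inverse a g" using assms(2) group_invertible_def by blast
  have B: "mp_inv s a = b" unfolding mp_inv_def
    using bm mp_unique[OF assms(1) _ bm] by blast
  have G: "group_inv a = g" unfolding group_inv_def
    using gm g_unique[OF _ gm] by blast
  have b1: "a*b*a = a" "b*a*b = b" "s (a*b) = a*b" "s (b*a) = b*a"
    using bm unfolding is_mp_inverse_def by auto
  have g1: "a*g*a = a" "g*a*g = g" "a*g = g*a"
    using gm unfolding is_group_inverse_def by auto
  have ga2: "g*a*a = a" by (simp only: g1(3)[symmetric] g1(1))
  have agba2: "a*g*b*(a*a) = a"
  proof -
    have "a*g*b*(a*a) = g*(a*b*a)*a" by (simp only: g1(3) mult.assoc)
    also have "\<dots> = a" by (simp only: b1(1) ga2)
    finally show ?thesis .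
  qed
  have gba2: "g*b*(a*a) = g*a"
  proof -
    have "g*b*(a*a) = g*a*g*b*(a*a)" by (simp only: g1(2))
    also have "\<dots> = g*(a*g*b*(a*a))" by (simp only: mult.assoc)
    finally show ?thesis by (simp only: agba2)
  qed
  have cond: "left_equiv (b*a*g) (a*s g*b) (b*a^2) \<longleftrightarrow> a * s g * b = a"
  proof
    assume "left_equiv (b*a*g) (a*s g*b) (b*a^2)"
    hence h: "b*a*g*(a*s g*b) = b*a*g*(b*(a*a))" by (simp add: left_equiv_def power2_eq_square)
    have "a*(b*a*g*(a*s g*b)) = (a*g*a)*s g*b" by (simp only: b1(1) mult.assoc[symmetric])
    hence 1: "a*(b*a*g*(a*s g*b)) = a * s g * b" by (simp only: g1(1))
    have "a*(b*a*g*(b*(a*a))) = a*g*b*(a*a)" by (simp only: b1(1) mult.assoc[symmetric])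
    hence 2: "a*(b*a*g*(b*(a*a))) = a" by (simp only: agba2)
    show "a * s g * b = a" using h 1 2 by simp
  next
    assume h: "a * s g * b = a"
    have "b*a*g*(a*s g*b) = b*a*(g*(a*s g*b))" by (simp only: mult.assoc)
    hence 1: "b*a*g*(a*s g*b) = b*a*(g*a)" by (simp only: h)
    have "b*a*g*(b*(a*a)) = b*a*(g*b*(a*a))" by (simp only: mult.assoc)
    hence 2: "b*a*g*(b*(a*a)) = b*a*(g*a)" by (simp only: gba2)
    show "left_equiv (b*a*g) (a*s g*b) (b*a^2)"
      using 1 2 by (simp add: left_equiv_def power2_eq_square)
  qed
  have "SEP s a \<longleftrightarrow> s a = b \<and> b = g"
    unfolding SEP_def B G using assms(2,3) by blast
  also have "\<dots> \<longleftrightarrow> a * s g * b = a"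
  proof
    assume "s a = b \<and> b = g"
    hence sa: "s a = b" and bg: "b = g" by auto
    have sg: "s g = a" using sa bg ss by metis
    have "a * s g * b = a*(a*g)" by (simp only: sg bg mult.assoc)
    also have "\<dots> = a" by (simp only: g1(3) mult.assoc[symmetric] ga2)
    finally show "a * s g * b = a" .
  next
    assume h: "a * s g * b = a"
    have "a*(a*b) = a*s g*(b*a*b)" by (simp only: h mult.assoc[symmetric])
    hence aab: "a*(a*b) = a" by (simp only: b1(2) h)
    have "a*b = g*a*a*b" by (simp only: ga2)
    also have "\<dots> = g*(a*(a*b))" by (simp only: mult.assoc)
    finally have ab: "a*b = g*a" by (simp only: aab)
    have "s a = s (a*(g*a))" by (simp only: g1(1) mult.assoc[symmetric])
    also have "\<dots> = s (a*b) * s a" by (simp only: sm ab)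
    finally have sa: "s a = g*a*s a" by (simp only: ab b1(3)[unfolded ab])
    have "b = s (b*a) * b" by (simp only: b1(4) b1(2))
    hence bstar: "b = s a * s b * b" by (simp only: sm)
    have "b = g*a*(s a * s b * b)" by (subst bstar, subst sa, simp only: mult.assoc)
    hence be: "b = g*a*b" by (simp only: bstar[symmetric])
    have ha: "b*a = g*a*(b*a)" by (subst be, simp only: mult.assoc[symmetric] be[symmetric])
    have "g*a*(b*a) = g*(a*b*a)" by (simp only: mult.assoc)
    hence "g*a*(b*a) = g*a" by (simp only: b1(1))
    hence ba: "b*a = g*a" using ha by simp
    have "b = (b*a)*b" by (simp only: b1(2))
    also have "\<dots> = g*(a*b)" by (simp only: ba mult.assoc)
    also have "\<dots> = g*a*g" by (simp only: ab g1(3) mult.assoc)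
    finally have bg: "b = g" by (simp only: g1(2))
    have abb: "a = a*s b*b" using h bg by simp
    have bba: "b*(b*a) = b"
    proof -
      have "b*(b*a) = g*(a*g)" by (simp only: bg g1(3))
      thus ?thesis by (simp only: bg g1(2) mult.assoc[symmetric])
    qed
    have bsb: "b*a*s b = s b"
    proof -
      have "b*a*s b = s (b*(b*a))" by (simp only: sm[of b "b*a"] b1(4))
      thus ?thesis by (simp only: bba)
    qed
    have bb: "b*a = s b * b"
    proof -
      have "b*a = b*(a*s b*b)" by (subst abb, rule refl)
      also have "\<dots> = (b*a*s b)*b" by (simp only: mult.assoc)
      finally show ?thesis by (simp only: bsb)
    qed
    have m1: "is_mp_inverse s b (s b)"
      unfolding is_mp_inverse_def
    proof (intro conjI)
      show "b * s b * b = b" by (simp only: mult.assoc bb[symmetric] bba)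
      show "s b * b * s b = s b" by (simp only: bb[symmetric] bsb)
      show "s (b * s b) = b * s b" by (simp only: sm ss)
      show "s (s b * b) = s b * b" by (simp only: sm ss)
    qed
    have m2: "is_mp_inverse s b a"
      unfolding is_mp_inverse_def using b1 by simp
    have "s b = a" using mp_unique[OF assms(1) m1 m2] .
    hence "s a = b" using ss by metis
    thus "s a = b \<and> b = g" using bg by simp
  qed
  finally show ?thesis using cond B G by simp
qed

end
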